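(* Let $n\ge1$ and $P=\Phi^+(B_n)=\{(i,j)\colon 1\le i\le j\le 2n-1,\ i+j\ge 2n\}$. Then for $k=2,4,\dots,2n-2$ we have \[2\sum_{\substack{(i,j)\in P\\ j-i=k}}\mathbb{1}_{(i,j)}-\sum_{\substack{(i,j)\in P\\ j-i=k-1}}\mathbb{1}_{(i,j)}-\sum_{\substack{(i,j)\in P\\ j-i=k+1}}\mathbb{1}_{(i,j)}\equiv 1,\] and furthermore \[2\sum_{(i,i)\in P}\mathbb{1}_{(i,i)}-2\sum_{(i,i+1)\in P}\mathbb{1}_{(i,i+1)}\equiv 1.\]
   Context: $P$ is ordered by $(i,j)\le(i',j')$ iff $i\le i'$ and $j\le j'$. $\mathcal{J}(P)$ is the set of order ideals of $P$. For $x\in P$, $I\in\mathcal{J}(P)$: $\mathbb{1}_x(I)=1$ if $x\in I$, else $0$; $T_x^+(I)=1$ if $x$ is a minimal element of $P\setminus I$, else $0$; $T_x^-(I)=1$ if $x$ is a maximal element of $I$, else $0$; $T_x=T_x^+-T_x^-$. For $f,g\colon\mathcal{J}(P)\to\mathbb{R}$, $f\equiv g$ means $f-g=\sum_{x\in P}c_xT_x$ for some real constants $c_x$; a real number denotes the corresponding constant function. *)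

theory Defs
  imports Complex_Main
begin

type_synonym pos = "nat \<times> nat"

definition ple :: "pos \<Rightarrow> pos \<Rightarrow> bool" where
  "ple x y \<longleftrightarrow> fst x \<le> fst y \<and> snd x \<le> snd y"

definition PhiB :: "nat \<Rightarrow> pos set" where
  "PhiB n = {(i,j). 1 \<le> i \<and> i \<le> j \<and> j \<le> 2*n - 1 \<and> i + j \<ge> 2*n}"

definition order_ideals :: "pos set \<Rightarrow> pos set set" where
  "order_ideals P = {I. I \<subseteq> P \<and> (\<forall>x\<in>I. \<forall>y\<in>P. ple y x \<longrightarrow> y \<in> I)}"

definition ind :: "pos \<Rightarrow> pos set \<Rightarrow> real" where
  "ind x I = (if x \<in> I then 1 else 0)"

definition Tplus :: "pos set \<Rightarrow> pos \<Rightarrow> pos set \<Rightarrow> real" where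
  "Tplus P x I = (if x \<in> P - I \<and> (\<forall>y\<in>P - I. ple y x \<longrightarrow> y = x) then 1 else 0)"

definition Tminus :: "pos set \<Rightarrow> pos \<Rightarrow> pos set \<Rightarrow> real" where
  "Tminus P x I = (if x \<in> I \<and> (\<forall>y\<in>I. ple x y \<longrightarrow> y = x) then 1 else 0)"

definition toggle :: "pos set \<Rightarrow> pos \<Rightarrow> pos set \<Rightarrow> real" where
  "toggle P x I = Tplus P x I - Tminus P x I"

definition toggle_equiv :: "pos set \<Rightarrow> (pos set \<Rightarrow> real) \<Rightarrow> (pos set \<Rightarrow> real) \<Rightarrow> bool" where
  "toggle_equiv P f g \<longleftrightarrow>
     (\<exists>c :: pos \<Rightarrow> real. \<forall>I\<in>order_ideals P. f I - g I = (\<Sum>x\<in>P. c x * toggle P x I))"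

end

theory Submission imports Defs begin

definition indL :: "pos set \<Rightarrow> pos \<Rightarrow> pos set \<Rightarrow> real" where
  "indL P a I = (if a \<in> P then ind a I else 1)"
definition indU :: "pos set \<Rightarrow> pos \<Rightarrow> pos set \<Rightarrow> real" where
  "indU P a I = (if a \<in> P then ind a I else 0)"

lemma memP: "(i,j) \<in> PhiB n \<longleftrightarrow> 1 \<le> i \<and> i \<le> j \<and> j \<le> 2*n-1 \<and> 2*n \<le> i+j"
  by (auto simp: PhiB_def)

lemma idealD: "I \<in> order_ideals P \<Longrightarrow> x \<in> I \<Longrightarrow> y \<in> P \<Longrightarrow> ple y x \<Longrightarrow> y \<in> I"
  by (auto simp: order_ideals_def)

lemma idealP: "I \<in> order_ideals P \<Longrightarrow> x \<in> I \<Longrightarrow> x \<in> P"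
  by (auto simp: order_ideals_def)

lemma Tplus_eq:
  assumes I: "I \<in> order_ideals (PhiB n)" and x: "(i,j) \<in> PhiB n"
  shows "Tplus (PhiB n) (i,j) I = indL (PhiB n) (i-1,j) I * indL (PhiB n) (i,j-1) I - ind (i,j) I"
proof (cases "(i,j) \<in> I")
  case True
  have "(i-1,j) \<in> PhiB n \<Longrightarrow> (i-1,j) \<in> I"
    using idealD[OF I True] by (auto simp: ple_def)
  moreover have "(i,j-1) \<in> PhiB n \<Longrightarrow> (i,j-1) \<in> I"
    using idealD[OF I True] by (auto simp: ple_def)
  ultimately show ?thesis using True by (auto simp: Tplus_def indL_def ind_def)
next
  case False
  have "(\<forall>y\<in>PhiB n - I. ple y (i,j) \<longrightarrow> y = (i,j)) \<longleftrightarrow>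
        (((i-1,j)\<in>PhiB n \<longrightarrow> (i-1,j)\<in>I) \<and> ((i,j-1)\<in>PhiB n \<longrightarrow> (i,j-1)\<in>I))"
  proof
    assume "\<forall>y\<in>PhiB n - I. ple y (i,j) \<longrightarrow> y = (i,j)"
    note A = bspec[OF this, simplified ple_def]
    have "(i-1,j)\<in>PhiB n \<longrightarrow> (i-1,j)\<in>I"
    proof
      assume "(i-1,j)\<in>PhiB n"
      then show "(i-1,j)\<in>I" using A[of "(i-1,j)"] x by (cases "(i-1,j) \<in> I") (auto simp: memP)
    qed
    moreover have "(i,j-1)\<in>PhiB n \<longrightarrow> (i,j-1)\<in>I"
    proof
      assume "(i,j-1)\<in>PhiB n"
      then show "(i,j-1)\<in>I" using A[of "(i,j-1)"] x by (cases "(i,j-1) \<in> I") (auto simp: memP)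
    qed
    ultimately show "((i-1,j)\<in>PhiB n \<longrightarrow> (i-1,j)\<in>I) \<and> ((i,j-1)\<in>PhiB n \<longrightarrow> (i,j-1)\<in>I)" by blast
  next
    assume H: "((i-1,j)\<in>PhiB n \<longrightarrow> (i-1,j)\<in>I) \<and> ((i,j-1)\<in>PhiB n \<longrightarrow> (i,j-1)\<in>I)"
    show "\<forall>y\<in>PhiB n - I. ple y (i,j) \<longrightarrow> y = (i,j)"
    proof (intro ballI impI)
      fix y assume y: "y \<in> PhiB n - I" "ple y (i,j)"
      obtain a b where yab: "y = (a,b)" by (cases y)
      show "y = (i,j)"
      proof (rule ccontr)
        assume ne: "y \<noteq> (i,j)"
        show False
        proof (cases "a < i")
          case True
          have "(i-1,j) \<in> PhiB n" using y x True by (auto simp: yab memP ple_def)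
          then have "(i-1,j) \<in> I" using H by blast
          then have "y \<in> I" using idealD[OF I] y True by (auto simp: yab ple_def)
          then show False using y by blast
        next
          case False
          then have ab: "a = i" "b < j" using y ne by (auto simp: yab ple_def)
          have "(i,j-1) \<in> PhiB n" using y x ab by (auto simp: yab memP ple_def)
          then have "(i,j-1) \<in> I" using H by blast
          then have "y \<in> I" using idealD[OF I] y ab by (auto simp: yab ple_def)
          then show False using y by blast
        qed
      qed
    qed
  qed
  then show ?thesis using False x by (auto simp: Tplus_def indL_def ind_def)
qed

lemma Tminus_eq:
  assumes I: "I \<in> order_ideals (PhiB n)" and x: "(i,j) \<in> PhiB n"
  shows "Tminus (PhiB n) (i,j) I = ind (i,j) I - indU (PhiB n) (i+1,j) I - indU (PhiB n) (i,j+1) I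
           + indU (PhiB n) (i+1,j) I * indU (PhiB n) (i,j+1) I"
proof (cases "(i,j) \<in> I")
  case False
  have "(i+1,j) \<notin> I" using idealD[OF I _ x, of "(i+1,j)"] False by (auto simp: ple_def)
  moreover have "(i,j+1) \<notin> I" using idealD[OF I _ x, of "(i,j+1)"] False by (auto simp: ple_def)
  ultimately show ?thesis using False by (auto simp: Tminus_def indU_def ind_def)
next
  case True
  have "(\<forall>y\<in>I. ple (i,j) y \<longrightarrow> y = (i,j)) \<longleftrightarrow>
        (((i+1,j)\<in>PhiB n \<longrightarrow> (i+1,j)\<notin>I) \<and> ((i,j+1)\<in>PhiB n \<longrightarrow> (i,j+1)\<notin>I))"
  proof
    assume "\<forall>y\<in>I. ple (i,j) y \<longrightarrow> y = (i,j)"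
    then show "((i+1,j)\<in>PhiB n \<longrightarrow> (i+1,j)\<notin>I) \<and> ((i,j+1)\<in>PhiB n \<longrightarrow> (i,j+1)\<notin>I)"
      by (auto simp: ple_def)
  next
    assume H: "((i+1,j)\<in>PhiB n \<longrightarrow> (i+1,j)\<notin>I) \<and> ((i,j+1)\<in>PhiB n \<longrightarrow> (i,j+1)\<notin>I)"
    show "\<forall>y\<in>I. ple (i,j) y \<longrightarrow> y = (i,j)"
    proof (intro ballI impI)
      fix y assume y: "y \<in> I" "ple (i,j) y"
      have yP: "y \<in> PhiB n" using idealP[OF I y(1)] .
      obtain a b where yab: "y = (a,b)" by (cases y)
      show "y = (i,j)"
      proof (rule ccontr)
        assume ne: "y \<noteq> (i,j)"
        show False
        proof (cases "j < b")
          case True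
          have "(i,j+1) \<in> PhiB n" using yP y x True by (auto simp: yab memP ple_def)
          moreover have "(i,j+1) \<in> I" using idealD[OF I y(1) calculation] y True by (auto simp: yab ple_def)
          ultimately show False using H by blast
        next
          case False
          then have ab: "b = j" "i < a" using y ne by (auto simp: yab ple_def)
          have "(i+1,j) \<in> PhiB n" using yP y x ab by (auto simp: yab memP ple_def)
          moreover have "(i+1,j) \<in> I" using idealD[OF I y(1) calculation] y ab by (auto simp: yab ple_def)
          ultimately show False using H by blast
        qed
      qed
    qed
  qed
  then show ?thesis using True x by (auto simp: Tminus_def indU_def ind_def)
qed


lemma finP: "finite (PhiB n)"
proof -
  have "PhiB n \<subseteq> {0..2*n} \<times> {0..2*n}" by (auto simp: PhiB_def)
  then show ?thesis by (rule finite_subset) auto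
qed

lemma diag_sum:
  assumes "d < 2*n"
  shows "(\<Sum>x\<in>{x\<in>PhiB n. snd x - fst x = d}. f x) = (\<Sum>i=n - d div 2..2*n-1-d. f (i,i+d))"
proof -
  have r: "{i. (i,i+d)\<in>PhiB n} = {n - d div 2..2*n-1-d}"
    using assms by (auto simp: memP)
  have "(\<Sum>x\<in>{x\<in>PhiB n. snd x - fst x = d}. f x) = (\<Sum>i\<in>{i. (i,i+d)\<in>PhiB n}. f (i,i+d))"
    by (rule sum.reindex_bij_witness[where i="\<lambda>i. (i,i+d)" and j=fst]) (auto simp: memP)
  then show ?thesis by (simp add: r)
qed

lemma telesc:
  fixes p q :: "nat \<Rightarrow> real"
  assumes "L \<le> H" "p L = 1" "q H = 0" "\<And>i. L \<le> i \<Longrightarrow> i < H \<Longrightarrow> p (Suc i) = q i"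
  shows "(\<Sum>i=L..H. p i) - (\<Sum>i=L..H. q i) = 1"
proof (cases "L = H")
  case True then show ?thesis using assms by simp
next
  case False
  then obtain H' where H: "H = Suc H'" "L \<le> H'" using assms(1) by (cases H) auto
  have "(\<Sum>i=L..H. p i) = p L + (\<Sum>i=Suc L..Suc H'. p i)"
    using H by (simp add: sum.atLeast_Suc_atMost)
  also have "(\<Sum>i=Suc L..Suc H'. p i) = (\<Sum>i=L..H'. p (Suc i))"
    by (rule sum.shift_bounds_cl_Suc_ivl)
  also have "\<dots> = (\<Sum>i=L..H'. q i)" using assms(4) H by (intro sum.cong) auto
  finally have 1: "(\<Sum>i=L..H. p i) = 1 + (\<Sum>i=L..H'. q i)" using assms by simp
  have 2: "(\<Sum>i=L..H. q i) = (\<Sum>i=L..H'. q i)" using H assms(3) by (simp add: sum.cl_ivl_Suc)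
  show ?thesis using 1 2 by simp
qed


lemma main_k:
  assumes I: "I \<in> order_ideals (PhiB n)" and k: "even k" "2 \<le> k" "k \<le> 2*n-2"
  shows "(\<Sum>x\<in>{x\<in>PhiB n. snd x - fst x = k}. toggle (PhiB n) x I)
         = 1 - 2 * (\<Sum>x\<in>{x\<in>PhiB n. snd x - fst x = k}. ind x I)
             + (\<Sum>x\<in>{x\<in>PhiB n. snd x - fst x = k - 1}. ind x I)
             + (\<Sum>x\<in>{x\<in>PhiB n. snd x - fst x = k + 1}. ind x I)"
proof -
  define L where "L = n - k div 2"
  define H where "H = 2*n-1-k"
  have LH: "L \<le> H" "1 \<le> L" "L + L + k = 2*n" "H + k = 2*n - 1" "1 \<le> H"
  proof -
    obtain m where m: "k = 2*m" using k(1) by blast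
    have "k div 2 = m" using m by simp
    then show "L \<le> H" "1 \<le> L" "L + L + k = 2*n" "H + k = 2*n - 1" "1 \<le> H"
      using k m unfolding L_def H_def by linarith+
  qed
  have kd: "(k-1) div 2 = k div 2 - 1" "(k+1) div 2 = k div 2" "1 \<le> k div 2"
  proof -
    obtain m where m: "k = 2*m" using k(1) by blast
    have "m \<ge> 1" using k m by simp
    then have "k - 1 = 2*(m-1) + 1" using m by simp
    then have "(k-1) div 2 = m - 1" by simp
    then show "(k-1) div 2 = k div 2 - 1" "(k+1) div 2 = k div 2" "1 \<le> k div 2" using m \<open>m \<ge> 1\<close> by simp_all
  qed
  have mem: "\<And>i. (i,i+k) \<in> PhiB n \<longleftrightarrow> L \<le> i \<and> i \<le> H"
    using LH by (auto simp: memP)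
  define u where "u i = ind (i,i+k) I" for i
  define p where "p i = indL (PhiB n) (i-1,i+k) I * indL (PhiB n) (i,i+k-1) I" for i
  define a where "a i = indU (PhiB n) (i+1,i+k) I" for i
  define b where "b i = indU (PhiB n) (i,i+k+1) I" for i
  have T: "toggle (PhiB n) (i,i+k) I = p i - 2*u i + a i + b i - a i * b i" if "L \<le> i" "i \<le> H" for i
  proof -
    have x: "(i,i+k) \<in> PhiB n" using mem that by blast
    show ?thesis unfolding toggle_def Tplus_eq[OF I x] Tminus_eq[OF I x] p_def u_def a_def b_def
      by (simp add: add.assoc)
  qed
  have kn: "k < 2*n" "k - 1 < 2*n" "k + 1 < 2*n" using k by auto
  have "(\<Sum>x\<in>{x\<in>PhiB n. snd x - fst x = k}. toggle (PhiB n) x I)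
        = (\<Sum>i=L..H. p i - 2*u i + a i + b i - a i * b i)"
    unfolding diag_sum[OF kn(1)] L_def[symmetric] H_def[symmetric] using T by (intro sum.cong) auto
  also have "\<dots> = ((\<Sum>i=L..H. p i) - (\<Sum>i=L..H. a i * b i)) - 2*(\<Sum>i=L..H. u i) + (\<Sum>i=L..H. a i) + (\<Sum>i=L..H. b i)"
    by (simp add: sum.distrib sum_subtractf sum_distrib_left)
  also have "(\<Sum>i=L..H. p i) - (\<Sum>i=L..H. a i * b i) = 1"
  proof (rule telesc[OF LH(1)])
    have "(L-1, L+k) \<notin> PhiB n" "(L, L+k-1) \<notin> PhiB n" using LH by (auto simp: memP)
    then show "p L = 1" by (simp add: p_def indL_def)
    have "(H, H+k+1) \<notin> PhiB n" using LH by (auto simp: memP)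
    then show "a H * b H = 0" by (simp add: b_def indU_def)
    fix i assume i: "L \<le> i" "i < H"
    have "(i, Suc i + k) \<in> PhiB n" "(Suc i, i+k) \<in> PhiB n" using LH i k by (auto simp: memP)
    then show "p (Suc i) = a i * b i" by (simp add: p_def a_def b_def indL_def indU_def)
  qed
  also have "(\<Sum>i=L..H. u i) = (\<Sum>x\<in>{x\<in>PhiB n. snd x - fst x = k}. ind x I)"
    unfolding diag_sum[OF kn(1)] L_def[symmetric] H_def[symmetric] u_def ..
  also have "(\<Sum>i=L..H. a i) = (\<Sum>x\<in>{x\<in>PhiB n. snd x - fst x = k - 1}. ind x I)"
  proof -
    have e1: "n - (k-1) div 2 = Suc L"
    proof -
      have "k div 2 \<le> n - 1" using LH(2) unfolding L_def by linarith
      then show ?thesis using kd unfolding L_def by linarith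
    qed
    have e2: "2*n-1-(k-1) = Suc H" using LH(4) k by linarith
    note e = e1 e2
    have "(\<Sum>x\<in>{x\<in>PhiB n. snd x - fst x = k - 1}. ind x I) = (\<Sum>i=Suc L..Suc H. ind (i, i + (k-1)) I)"
      unfolding diag_sum[OF kn(2)] e ..
    also have "\<dots> = (\<Sum>i=L..H. ind (Suc i, Suc i + (k-1)) I)" by (rule sum.shift_bounds_cl_Suc_ivl)
    also have "\<dots> = (\<Sum>i=L..H. a i)"
    proof (intro sum.cong refl)
      fix i assume "i \<in> {L..H}"
      then have "(Suc i, i+k) \<in> PhiB n" using LH k by (auto simp: memP)
      moreover have "Suc i + (k-1) = i + k" using k by simp
      ultimately show "ind (Suc i, Suc i + (k-1)) I = a i" by (simp add: a_def indU_def)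
    qed
    finally show ?thesis ..
  qed
  also have "(\<Sum>i=L..H. b i) = (\<Sum>x\<in>{x\<in>PhiB n. snd x - fst x = k + 1}. ind x I)"
  proof -
    obtain H' where H': "H = Suc H'" using LH by (cases H) auto
    have e1: "n - (k+1) div 2 = L" using kd unfolding L_def by simp
    have e2: "2*n-1-(k+1) = H'" using LH(4) H' by linarith
    note e = e1 e2
    have "(H, H+k+1) \<notin> PhiB n" using LH by (auto simp: memP)
    then have bH: "b H = 0" by (simp add: b_def indU_def)
    have "(\<Sum>i=L..H. b i) = (\<Sum>i=L..H'. b i)" using H' bH by (simp add: sum.cl_ivl_Suc)
    also have "\<dots> = (\<Sum>i=L..H'. ind (i, i + (k+1)) I)"
    proof (intro sum.cong refl)
      fix i assume "i \<in> {L..H'}"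
      then have "(i, i+k+1) \<in> PhiB n" using LH k H' by (auto simp: memP)
      then show "b i = ind (i, i + (k+1)) I" by (simp add: b_def indU_def)
    qed
    also have "\<dots> = (\<Sum>x\<in>{x\<in>PhiB n. snd x - fst x = k + 1}. ind x I)"
      unfolding diag_sum[OF kn(3)] e ..
    finally show ?thesis .
  qed
  finally show ?thesis .
qed


lemma main_0:
  assumes I: "I \<in> order_ideals (PhiB n)" and n: "n \<ge> 1"
  shows "(\<Sum>x\<in>{x\<in>PhiB n. snd x = fst x}. toggle (PhiB n) x I)
         = 1 - 2 * (\<Sum>x\<in>{x\<in>PhiB n. snd x = fst x}. ind x I)
             + 2 * (\<Sum>x\<in>{x\<in>PhiB n. snd x = fst x + 1}. ind x I)"
proof -
  have s0: "{x\<in>PhiB n. snd x = fst x} = {x\<in>PhiB n. snd x - fst x = 0}"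
    by (auto simp: PhiB_def)
  have s1: "{x\<in>PhiB n. snd x = fst x + 1} = {x\<in>PhiB n. snd x - fst x = 1}"
    by (auto simp: PhiB_def)
  define u where "u i = ind (i,i) I" for i
  define p where "p i = indL (PhiB n) (i-1,i) I" for i
  define b where "b i = indU (PhiB n) (i,i+1) I" for i
  have mem: "(i,i) \<in> PhiB n \<longleftrightarrow> n \<le> i \<and> i \<le> 2*n-1" for i
    using n by (auto simp: memP)
  have T: "toggle (PhiB n) (i,i) I = p i - 2*u i + b i" if "n \<le> i" "i \<le> 2*n-1" for i
  proof -
    have x: "(i,i) \<in> PhiB n" using mem that by blast
    have "(i,i-1) \<notin> PhiB n" "(i+1,i) \<notin> PhiB n" using that n by (auto simp: memP)
    then show ?thesis unfolding toggle_def Tplus_eq[OF I x] Tminus_eq[OF I x] p_def u_def b_def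
      by (simp add: indL_def indU_def)
  qed
  have d0: "0 < 2*n" "1 < 2*n" using n by auto
  have e: "n - 0 div 2 = n" "n - 1 div 2 = n" "2*n-1-0 = 2*n-1" by auto
  have "(\<Sum>x\<in>{x\<in>PhiB n. snd x = fst x}. toggle (PhiB n) x I) = (\<Sum>i=n..2*n-1. p i - 2*u i + b i)"
    unfolding s0 diag_sum[OF d0(1)] e using T by (intro sum.cong) auto
  also have "\<dots> = (\<Sum>i=n..2*n-1. p i) - 2*(\<Sum>i=n..2*n-1. u i) + (\<Sum>i=n..2*n-1. b i)"
    by (simp add: sum.distrib sum_subtractf sum_distrib_left)
  also have "(\<Sum>i=n..2*n-1. p i) = 1 + (\<Sum>i=n..2*n-1. b i)"
  proof -
    have "(\<Sum>i=n..2*n-1. p i) - (\<Sum>i=n..2*n-1. b i) = 1"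
    proof (rule telesc)
      show "n \<le> 2*n-1" using n by simp
      have "(n-1,n) \<notin> PhiB n" using n by (auto simp: memP)
      then show "p n = 1" by (simp add: p_def indL_def)
      have "(2*n-1, 2*n-1+1) \<notin> PhiB n" using n by (auto simp: memP)
      then show "b (2*n-1) = 0" by (simp add: b_def indU_def)
      fix i assume i: "n \<le> i" "i < 2*n-1"
      have "(i, Suc i) \<in> PhiB n" using i n by (auto simp: memP)
      then show "p (Suc i) = b i" by (simp add: p_def b_def indL_def indU_def)
    qed
    then show ?thesis by simp
  qed
  also have "(\<Sum>i=n..2*n-1. u i) = (\<Sum>x\<in>{x\<in>PhiB n. snd x = fst x}. ind x I)"
    unfolding s0 diag_sum[OF d0(1)] e u_def by simp
  also have "(\<Sum>i=n..2*n-1. b i) = (\<Sum>x\<in>{x\<in>PhiB n. snd x = fst x + 1}. ind x I)"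
  proof -
    obtain H' where H': "2*n-1 = Suc H'" "n \<le> H' + 1" using n by (cases "2*n-1") auto
    have e2: "2*n-1-1 = H'" using H' by simp
    have "(2*n-1, 2*n-1+1) \<notin> PhiB n" using n by (auto simp: memP)
    then have bH: "b (2*n-1) = 0" by (simp add: b_def indU_def)
    have "(\<Sum>i=n..2*n-1. b i) = (\<Sum>i=n..H'. b i)" using H' bH by (simp add: sum.cl_ivl_Suc)
    also have "\<dots> = (\<Sum>i=n..H'. ind (i, i + 1) I)"
    proof (intro sum.cong refl)
      fix i assume "i \<in> {n..H'}"
      then have "(i, i+1) \<in> PhiB n" using H' n by (auto simp: memP)
      then show "b i = ind (i, i + 1) I" by (simp add: b_def indU_def)
    qed
    also have "\<dots> = (\<Sum>x\<in>{x\<in>PhiB n. snd x = fst x + 1}. ind x I)"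
      unfolding s1 diag_sum[OF d0(2)] e e2 ..
    finally show ?thesis .
  qed
  finally show ?thesis by simp
qed

theorem theorem3p37:
  fixes n :: nat
  assumes "n \<ge> 1"
  shows "(\<forall>k. even k \<and> 2 \<le> k \<and> k \<le> 2*n - 2 \<longrightarrow>
           toggle_equiv (PhiB n)
             (\<lambda>I. 2 * (\<Sum>x\<in>{x\<in>PhiB n. snd x - fst x = k}. ind x I)
                  - (\<Sum>x\<in>{x\<in>PhiB n. snd x - fst x = k - 1}. ind x I)
                  - (\<Sum>x\<in>{x\<in>PhiB n. snd x - fst x = k + 1}. ind x I))
             (\<lambda>I. 1))
       \<and> toggle_equiv (PhiB n)
           (\<lambda>I. 2 * (\<Sum>x\<in>{x\<in>PhiB n. snd x = fst x}. ind x I)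
                - 2 * (\<Sum>x\<in>{x\<in>PhiB n. snd x = fst x + 1}. ind x I))
           (\<lambda>I. 1)"
proof (intro conjI allI impI)
  fix k assume k: "even k \<and> 2 \<le> k \<and> k \<le> 2*n - 2"
  show "toggle_equiv (PhiB n)
             (\<lambda>I. 2 * (\<Sum>x\<in>{x\<in>PhiB n. snd x - fst x = k}. ind x I)
                  - (\<Sum>x\<in>{x\<in>PhiB n. snd x - fst x = k - 1}. ind x I)
                  - (\<Sum>x\<in>{x\<in>PhiB n. snd x - fst x = k + 1}. ind x I))
             (\<lambda>I. 1)"
    unfolding toggle_equiv_def
  proof (intro exI ballI)
    fix I assume I: "I \<in> order_ideals (PhiB n)"
    have "(\<Sum>x\<in>PhiB n. (if snd x - fst x = k then -1 else 0) * toggle (PhiB n) x I)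
          = - (\<Sum>x\<in>PhiB n. if snd x - fst x = k then toggle (PhiB n) x I else 0)"
      unfolding sum_negf[symmetric] by (intro sum.cong) auto
    also have "\<dots> = - (\<Sum>x\<in>{x\<in>PhiB n. snd x - fst x = k}. toggle (PhiB n) x I)"
      by (simp add: sum.inter_filter[OF finP])
    finally show "2 * (\<Sum>x\<in>{x\<in>PhiB n. snd x - fst x = k}. ind x I)
                  - (\<Sum>x\<in>{x\<in>PhiB n. snd x - fst x = k - 1}. ind x I)
                  - (\<Sum>x\<in>{x\<in>PhiB n. snd x - fst x = k + 1}. ind x I) - 1
          = (\<Sum>x\<in>PhiB n. (if snd x - fst x = k then -1 else 0) * toggle (PhiB n) x I)"
      using main_k[OF I] k by simp
  qed
next
  show "toggle_equiv (PhiB n)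
           (\<lambda>I. 2 * (\<Sum>x\<in>{x\<in>PhiB n. snd x = fst x}. ind x I)
                - 2 * (\<Sum>x\<in>{x\<in>PhiB n. snd x = fst x + 1}. ind x I))
           (\<lambda>I. 1)"
    unfolding toggle_equiv_def
  proof (intro exI ballI)
    fix I assume I: "I \<in> order_ideals (PhiB n)"
    have "(\<Sum>x\<in>PhiB n. (if snd x = fst x then -1 else 0) * toggle (PhiB n) x I)
          = - (\<Sum>x\<in>PhiB n. if snd x = fst x then toggle (PhiB n) x I else 0)"
      unfolding sum_negf[symmetric] by (intro sum.cong) auto
    also have "\<dots> = - (\<Sum>x\<in>{x\<in>PhiB n. snd x = fst x}. toggle (PhiB n) x I)"
      by (simp add: sum.inter_filter[OF finP])
    finally show "2 * (\<Sum>x\<in>{x\<in>PhiB n. snd x = fst x}. ind x I)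
                - 2 * (\<Sum>x\<in>{x\<in>PhiB n. snd x = fst x + 1}. ind x I) - 1
          = (\<Sum>x\<in>PhiB n. (if snd x = fst x then -1 else 0) * toggle (PhiB n) x I)"
      using main_0[OF I assms] by simp
  qed
qed

end
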